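(* Let $\sigma\in\mathcal S_d$. Then $\sigma\in\mathcal B$ if and only if there exists a probability vector $\mathbf p$ on $\mathcal I$ (entries $\ge0$ summing to $1$) such that $\chi_{\sigma_1}(\mathbf p)<\chi_{\sigma_2}(\mathbf p)<\dots<\chi_{\sigma_d}(\mathbf p)$.
   Context: Setting: $\mathcal I=\{1,\dots,N\}$, $f_i(x)=A_ix+t_i$ on $\mathbb R^d$ with $A_i=\mathrm{diag}(\lambda_i^{(1)},\dots,\lambda_i^{(d)})$, all $\lambda_i^{(n)}\in(0,1)$, $f_i([0,1]^d)\subset[0,1]^d$, no two maps agree on $[0,1]^d$, and for all $m\ne n$ there is $i$ with $\lambda_i^{(n)}\ne\lambda_i^{(m)}$. $\Sigma=\mathcal I^{\mathbb N}$. For $\mathbf i\in\Sigma$, $r>0$, $1\le n\le d$, $L_{\mathbf i}(r,n)$ is the unique integer with $\prod_{\ell=1}^{L_{\mathbf i}(r,n)}\lambda_{i_\ell}^{(n)}\le r<\prod_{\ell=1}^{L_{\mathbf i}(r,n)-1}\lambda_{i_\ell}^{(n)}$. For a permutation $\sigma=(\sigma_1,\dots,\sigma_d)$ of $\{1,\dots,d\}$, $\mathbf i$ determines a strictly $\sigma$-ordered cylinder at scale $r$ if, with $L=L_{\mathbf i}(r,\sigma_d)$, $\prod_{\ell=1}^L\lambda_{i_\ell}^{(\sigma_d)}<\prod_{\ell=1}^L\lambda_{i_\ell}^{(\sigma_{d-1})}<\dots<\prod_{\ell=1}^L\lambda_{i_\ell}^{(\sigma_1)}$. $\mathcal B$ is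 the set of $\sigma$ for which some $\mathbf i\in\Sigma$ and $r>0$ determine a strictly $\sigma$-ordered cylinder at scale $r$. Lyapunov exponent: $\chi_x(\mathbf p)=-\sum_{i\in\mathcal I}p(i)\log\lambda_i^{(x)}$ for a coordinate $x$. *)

theory Defs
  imports "HOL-Analysis.Analysis"
begin

text \<open>Maps are indexed by \<open>i \<in> {1..N}\<close>, coordinates by \<open>n \<in> {1..d}\<close>.
  \<open>lam i n\<close> is the diagonal entry \<open>\<lambda>_i^{(n)}\<close>, \<open>t i n\<close> the n-th translation coordinate.
  Points of R^d are functions \<open>nat \<Rightarrow> real\<close> restricted to coordinates 1..d.\<close>

definition unit_cube :: "nat \<Rightarrow> (nat \<Rightarrow> real) set" where
  "unit_cube d = {x. \<forall>n\<in>{1..d}. 0 \<le> x n \<and> x n \<le> 1}"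

definition affine_map :: "nat \<Rightarrow> (nat \<Rightarrow> nat \<Rightarrow> real) \<Rightarrow> (nat \<Rightarrow> nat \<Rightarrow> real) \<Rightarrow> nat
    \<Rightarrow> (nat \<Rightarrow> real) \<Rightarrow> (nat \<Rightarrow> real)" where
  "affine_map d lam t i x = (\<lambda>n. if n \<in> {1..d} then lam i n * x n + t i n else 0)"

definition diag_system :: "nat \<Rightarrow> nat \<Rightarrow> (nat \<Rightarrow> nat \<Rightarrow> real) \<Rightarrow> (nat \<Rightarrow> nat \<Rightarrow> real) \<Rightarrow> bool" where
  "diag_system N d lam t \<longleftrightarrow>
     (\<forall>i\<in>{1..N}. \<forall>n\<in>{1..d}. 0 < lam i n \<and> lam i n < 1) \<and>
     (\<forall>i\<in>{1..N}. affine_map d lam t i ` unit_cube d \<subseteq> unit_cube d) \<and>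
     (\<forall>i\<in>{1..N}. \<forall>j\<in>{1..N}. i \<noteq> j \<longrightarrow>
        (\<exists>x\<in>unit_cube d. affine_map d lam t i x \<noteq> affine_map d lam t j x)) \<and>
     (\<forall>m\<in>{1..d}. \<forall>n\<in>{1..d}. m \<noteq> n \<longrightarrow> (\<exists>i\<in>{1..N}. lam i n \<noteq> lam i m))"

text \<open>Symbolic space: sequences \<open>i_1 i_2 \<dots>\<close> with entries in {1..N}; we store \<open>i_{\<ell>+1}\<close>
  as \<open>w \<ell>\<close> (0-based).\<close>

definition Sigma_N :: "nat \<Rightarrow> (nat \<Rightarrow> nat) set" where
  "Sigma_N N = {w. \<forall>l. w l \<in> {1..N}}"

definition cprod :: "(nat \<Rightarrow> nat \<Rightarrow> real) \<Rightarrow> (nat \<Rightarrow> nat) \<Rightarrow> nat \<Rightarrow> nat \<Rightarrow> real" where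
  "cprod lam w L n = (\<Prod>l<L. lam (w l) n)"

definition Lscale :: "(nat \<Rightarrow> nat \<Rightarrow> real) \<Rightarrow> (nat \<Rightarrow> nat) \<Rightarrow> real \<Rightarrow> nat \<Rightarrow> nat" where
  "Lscale lam w r n = (THE L. 1 \<le> L \<and> cprod lam w L n \<le> r \<and> r < cprod lam w (L - 1) n)"

definition strictly_ordered_cyl ::
  "nat \<Rightarrow> (nat \<Rightarrow> nat \<Rightarrow> real) \<Rightarrow> (nat \<Rightarrow> nat) \<Rightarrow> (nat \<Rightarrow> nat) \<Rightarrow> real \<Rightarrow> bool" where
  "strictly_ordered_cyl d lam \<sigma> w r \<longleftrightarrow>
     (let L = Lscale lam w r (\<sigma> d) in
      \<forall>k\<in>{1..<d}. cprod lam w L (\<sigma> (k+1)) < cprod lam w L (\<sigma> k))"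

definition Bset :: "nat \<Rightarrow> nat \<Rightarrow> (nat \<Rightarrow> nat \<Rightarrow> real) \<Rightarrow> (nat \<Rightarrow> nat) set" where
  "Bset N d lam = {\<sigma>. \<sigma> permutes {1..d} \<and>
      (\<exists>w\<in>Sigma_N N. \<exists>r. 0 < r \<and> r < 1 \<and> strictly_ordered_cyl d lam \<sigma> w r)}"

definition lyap :: "nat \<Rightarrow> (nat \<Rightarrow> nat \<Rightarrow> real) \<Rightarrow> nat \<Rightarrow> (nat \<Rightarrow> real) \<Rightarrow> real" where
  "lyap N lam x p = - (\<Sum>i\<in>{1..N}. p i * ln (lam i x))"

definition prob_vector :: "nat \<Rightarrow> (nat \<Rightarrow> real) \<Rightarrow> bool" where
  "prob_vector N p \<longleftrightarrow> (\<forall>i\<in>{1..N}. 0 \<le> p i) \<and> (\<Sum>i\<in>{1..N}. p i) = 1"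

end

theory Submission imports Defs begin
lemma prod_list_concat_map:
  "prod_list (map f (concat (map g ys))) = prod_list (map (\<lambda>y. prod_list (map f (g y))) ys)"
  for f :: "'a \<Rightarrow> real"
  by (induction ys) auto

lemma word_exists:
  fixes a :: "nat \<Rightarrow> nat"
  assumes "N \<ge> 1"
  shows "\<exists>w\<in>Sigma_N N. \<exists>L. \<forall>n. cprod lam w L n = (\<Prod>i\<in>{1..N}. lam i n ^ a i)"
proof -
  define xs where "xs = concat (map (\<lambda>i. replicate (a i) i) [1..<N+1])"
  define w where "w = (\<lambda>l. if l < length xs then xs ! l else 1)"
  have set: "set xs \<subseteq> {1..N}" unfolding xs_def by auto
  have w: "w \<in> Sigma_N N" unfolding Sigma_N_def w_def using set assms by (auto dest: nth_mem)
  have "cprod lam w (length xs) n = (\<Prod>i\<in>{1..N}. lam i n ^ a i)" for n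
  proof -
    have "cprod lam w (length xs) n = (\<Prod>l<length xs. lam (xs ! l) n)"
      unfolding cprod_def w_def by (rule prod.cong) auto
    also have "\<dots> = prod_list (map (\<lambda>i. lam i n) xs)"
      by (simp add: prod.list_conv_set_nth atLeast0LessThan)
    also have "\<dots> = prod_list (map (\<lambda>i. lam i n ^ a i) [1..<N+1])"
      unfolding xs_def by (simp add: prod_list_concat_map)
    also have "\<dots> = (\<Prod>i\<in>{1..N}. lam i n ^ a i)"
      by (subst prod.distinct_set_conv_list[symmetric]) (auto intro!: prod.cong)
    finally show ?thesis .
  qed
  then show ?thesis using w by blast
qed
lemma cprod_pos:
  assumes "w \<in> Sigma_N N" "\<forall>i\<in>{1..N}. 0 < lam i n"
  shows "0 < cprod lam w L n"
  unfolding cprod_def using assms by (auto simp: Sigma_N_def intro!: prod_pos)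

lemma cprod_strict:
  assumes "w \<in> Sigma_N N" "\<forall>i\<in>{1..N}. 0 < lam i n \<and> lam i n < 1" "m < m'"
  shows "cprod lam w m' n < cprod lam w m n"
proof -
  have "(\<lambda>m. - cprod lam w m n) m < (\<lambda>m. - cprod lam w m n) m'"
  proof (rule lift_Suc_mono_less[OF _ assms(3)])
    fix k
    have p: "0 < cprod lam w k n" using cprod_pos assms by blast
    have "w k \<in> {1..N}" using assms(1) by (auto simp: Sigma_N_def)
    then have "lam (w k) n < 1" using assms(2) by blast
    then have "cprod lam w k n * lam (w k) n < cprod lam w k n" using p by simp
    then show "- cprod lam w k n < - cprod lam w (Suc k) n"
      by (simp add: cprod_def)
  qed
  then show ?thesis by simp
qed

lemma cprod_anti:
  assumes "w \<in> Sigma_N N" "\<forall>i\<in>{1..N}. 0 < lam i n \<and> lam i n < 1" "m \<le> m'"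
  shows "cprod lam w m' n \<le> cprod lam w m n"
  using cprod_strict[of w N lam n, OF assms(1,2)] assms(3) by (cases "m = m'") (auto intro: less_imp_le)

lemma Lscale_eq:
  assumes "w \<in> Sigma_N N" "\<forall>i\<in>{1..N}. 0 < lam i n \<and> lam i n < 1" "1 \<le> L"
  shows "Lscale lam w (cprod lam w L n) n = L"
  unfolding Lscale_def
proof (rule the_equality)
  show "1 \<le> L \<and> cprod lam w L n \<le> cprod lam w L n \<and> cprod lam w L n < cprod lam w (L - 1) n"
    using assms cprod_strict[of w N lam n, OF assms(1,2), of "L - 1" L] by simp
next
  fix L' assume h: "1 \<le> L' \<and> cprod lam w L' n \<le> cprod lam w L n \<and> cprod lam w L n < cprod lam w (L' - 1) n"
  show "L' = L"
  proof (rule ccontr)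
    assume "L' \<noteq> L"
    then consider "L' < L" | "L \<le> L' - 1" by linarith
    then show False
    proof cases
      case 1 then show ?thesis using cprod_strict[of w N lam n, OF assms(1,2) 1] h by linarith
    next
      case 2 then show ?thesis using cprod_anti[of w N lam n, OF assms(1,2) 2] h by linarith
    qed
  qed
qed

lemma ln_cprod:
  assumes "w \<in> Sigma_N N" "\<forall>i\<in>{1..N}. 0 < lam i n"
  shows "ln (cprod lam w L n) = (\<Sum>i\<in>{1..N}. (\<Sum>l<L. if w l = i then 1 else 0) * ln (lam i n))"
proof -
  have wl: "w l \<in> {1..N}" for l using assms(1) by (auto simp: Sigma_N_def)
  have "ln (cprod lam w L n) = (\<Sum>l<L. ln (lam (w l) n))"
  proof -
    have "0 < lam (w l) n" for l using assms(2) wl[of l] by blast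
    then show ?thesis unfolding cprod_def by (subst ln_prod) (auto simp: less_imp_neq[symmetric])
  qed
  also have "\<dots> = (\<Sum>l<L. \<Sum>i\<in>{1..N}. (if w l = i then 1 else 0) * ln (lam i n))"
  proof (rule sum.cong[OF refl])
    fix l
    have "(\<Sum>i\<in>{1..N}. (if w l = i then 1 else 0) * ln (lam i n)) = (\<Sum>i\<in>{1..N}. if w l = i then ln (lam i n) else 0)"
      by (rule sum.cong) auto
    also have "\<dots> = ln (lam (w l) n)" using wl[of l] by (simp add: sum.delta)
    finally show "ln (lam (w l) n) = (\<Sum>i\<in>{1..N}. (if w l = i then 1 else 0) * ln (lam i n))" by simp
  qed
  also have "\<dots> = (\<Sum>i\<in>{1..N}. \<Sum>l<L. (if w l = i then 1 else 0) * ln (lam i n))"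
    by (rule sum.swap)
  also have "\<dots> = (\<Sum>i\<in>{1..N}. (\<Sum>l<L. if w l = i then 1 else 0) * ln (lam i n))"
    by (simp add: sum_distrib_right)
  finally show ?thesis .
qed

theorem lemma3p1:
  fixes N d :: nat and lam t :: "nat \<Rightarrow> nat \<Rightarrow> real" and \<sigma> :: "nat \<Rightarrow> nat"
  assumes "diag_system N d lam t"
    and "\<sigma> permutes {1..d}"
  shows "\<sigma> \<in> Bset N d lam \<longleftrightarrow>
    (\<exists>p. prob_vector N p \<and> (\<forall>k\<in>{1..<d}. lyap N lam (\<sigma> k) p < lyap N lam (\<sigma> (k+1)) p))"
proof -
  have pos: "\<forall>i\<in>{1..N}. 0 < lam i n \<and> lam i n < 1" if "n \<in> {1..d}" for n
    using assms(1) that by (simp add: diag_system_def)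
  have sig: "\<sigma> k \<in> {1..d}" if "k \<in> {1..d}" for k
    using permutes_in_image[OF assms(2)] that by blast
  show ?thesis
  proof
    assume "\<sigma> \<in> Bset N d lam"
    then obtain w r where w: "w \<in> Sigma_N N" and so: "strictly_ordered_cyl d lam \<sigma> w r"
      by (auto simp: Bset_def)
    define L where "L = Lscale lam w r (\<sigma> d)"
    have ord: "\<forall>k\<in>{1..<d}. cprod lam w L (\<sigma> (k+1)) < cprod lam w L (\<sigma> k)"
      using so by (simp add: strictly_ordered_cyl_def L_def Let_def)
    have N1: "1 \<le> N" using w by (auto simp: Sigma_N_def)
    show "\<exists>p. prob_vector N p \<and> (\<forall>k\<in>{1..<d}. lyap N lam (\<sigma> k) p < lyap N lam (\<sigma> (k+1)) p)"
    proof (cases "d \<le> 1")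
      case True
      have "prob_vector N (\<lambda>i. if i = 1 then 1 else 0)"
        using N1 by (simp add: prob_vector_def sum.delta)
      then show ?thesis using True by auto
    next
      case False
      have L0: "L \<noteq> 0"
      proof
        assume "L = 0"
        then show False using ord False by (auto simp: cprod_def)
      qed
      define c where "c i = (\<Sum>l<L. if w l = i then 1 else 0 :: real)" for i
      define p where "p i = c i / real L" for i
      have wl: "w l \<in> {1..N}" for l using w by (auto simp: Sigma_N_def)
      have csum: "(\<Sum>i\<in>{1..N}. c i) = real L"
      proof -
        have "(\<Sum>i\<in>{1..N}. c i) = (\<Sum>l<L. \<Sum>i\<in>{1..N}. if w l = i then 1 else 0 :: real)"
          unfolding c_def by (rule sum.swap)
        also have "\<dots> = (\<Sum>l<L. 1)" using wl by (simp add: sum.delta)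
        finally show ?thesis by simp
      qed
      have pv: "prob_vector N p"
        unfolding prob_vector_def p_def using csum L0
        by (auto simp: c_def sum_divide_distrib[symmetric] intro!: sum_nonneg divide_nonneg_nonneg)
      have ly: "lyap N lam n p = - ln (cprod lam w L n) / real L" if "n \<in> {1..d}" for n
      proof -
        have "ln (cprod lam w L n) = (\<Sum>i\<in>{1..N}. c i * ln (lam i n))"
          unfolding c_def using ln_cprod[OF w] pos[OF that] by simp
        then show ?thesis unfolding lyap_def p_def
          by (simp add: sum_divide_distrib[symmetric])
      qed
      have "lyap N lam (\<sigma> k) p < lyap N lam (\<sigma> (k+1)) p" if k: "k \<in> {1..<d}" for k
      proof -
        have k1: "k \<in> {1..d}" "k + 1 \<in> {1..d}" using k by auto
        have p1: "0 < cprod lam w L (\<sigma> (k+1))" using cprod_pos[OF w] pos[OF sig[OF k1(2)]] by blast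
        have "ln (cprod lam w L (\<sigma> (k+1))) < ln (cprod lam w L (\<sigma> k))"
        proof -
          have o: "cprod lam w L (\<sigma> (k+1)) < cprod lam w L (\<sigma> k)" using ord k by blast
          show ?thesis using p1 o by (subst ln_less_cancel_iff) auto
        qed
        then have "- ln (cprod lam w L (\<sigma> k)) / real L < - ln (cprod lam w L (\<sigma> (k+1))) / real L"
          using L0 by (simp add: divide_strict_right_mono)
        then show ?thesis using ly[OF sig[OF k1(1)]] ly[OF sig[OF k1(2)]] by simp
      qed
      then show ?thesis using pv by blast
    qed
  next
    assume "\<exists>p. prob_vector N p \<and> (\<forall>k\<in>{1..<d}. lyap N lam (\<sigma> k) p < lyap N lam (\<sigma> (k+1)) p)"
    then obtain p where pv: "prob_vector N p"
      and lo: "\<forall>k\<in>{1..<d}. lyap N lam (\<sigma> k) p < lyap N lam (\<sigma> (k+1)) p" by blast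
    have N1: "1 \<le> N"
    proof (rule ccontr)
      assume "\<not> 1 \<le> N" then have "N = 0" by simp
      then show False using pv by (simp add: prob_vector_def)
    qed
    show "\<sigma> \<in> Bset N d lam"
    proof (cases "d \<le> 1")
      case True
      have "(\<lambda>_. 1) \<in> Sigma_N N" using N1 by (simp add: Sigma_N_def)
      moreover have "strictly_ordered_cyl d lam \<sigma> (\<lambda>_. 1) (1/2)"
        using True by (simp add: strictly_ordered_cyl_def)
      ultimately show ?thesis using assms(2) unfolding Bset_def
        by (intro CollectI conjI bexI[of _ "\<lambda>_. 1"] exI[of _ "1/2"]) auto
    next
      case False
      define g where "g n = (\<Sum>i\<in>{1..N}. p i * ln (lam i n))" for n
      define C where "C n = (\<Sum>i\<in>{1..N}. \<bar>ln (lam i n)\<bar>)" for n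
      define gap where "gap k = g (\<sigma> k) - g (\<sigma> (k+1))" for k
      have gap_pos: "0 < gap k" if "k \<in> {1..<d}" for k
        using lo that by (simp add: gap_def g_def lyap_def)
      have C0: "0 \<le> C n" for n unfolding C_def by (rule sum_nonneg) auto
      define B where "B = (\<Sum>k\<in>{1..<d}. (C (\<sigma> k) + C (\<sigma> (k+1))) / gap k)"
      obtain M :: nat where M: "B < real M" using reals_Archimedean2 by blast
      have Mgap: "C (\<sigma> k) + C (\<sigma> (k+1)) < real M * gap k" if k: "k \<in> {1..<d}" for k
      proof -
        have "(C (\<sigma> k) + C (\<sigma> (k+1))) / gap k \<le> B"
          unfolding B_def
          by (rule member_le_sum[OF k]) (use gap_pos C0 in \<open>auto intro!: divide_nonneg_pos add_nonneg_nonneg\<close>)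
        then have "(C (\<sigma> k) + C (\<sigma> (k+1))) / gap k < real M" using M by linarith
        then show ?thesis using gap_pos[OF k] by (simp add: pos_divide_less_eq)
      qed
      define a where "a i = nat (floor (real M * p i))" for i
      have p0: "0 \<le> p i" if "i \<in> {1..N}" for i using pv that by (simp add: prob_vector_def)
      have adiff: "\<bar>real (a i) - real M * p i\<bar> \<le> 1" if "i \<in> {1..N}" for i
      proof -
        have "0 \<le> real M * p i" using p0[OF that] by simp
        then have "real (a i) = of_int (floor (real M * p i))" unfolding a_def by simp
        then show ?thesis by linarith
      qed
      have approx: "\<bar>(\<Sum>i\<in>{1..N}. real (a i) * ln (lam i n)) - real M * g n\<bar> \<le> C n" for n
      proof -
        have "(\<Sum>i\<in>{1..N}. real (a i) * ln (lam i n)) - real M * g n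
            = (\<Sum>i\<in>{1..N}. (real (a i) - real M * p i) * ln (lam i n))"
          unfolding g_def by (simp add: sum_distrib_left sum_subtractf[symmetric] algebra_simps)
        also have "\<bar>\<dots>\<bar> \<le> (\<Sum>i\<in>{1..N}. \<bar>(real (a i) - real M * p i) * ln (lam i n)\<bar>)"
          by (rule sum_abs)
        also have "\<dots> \<le> C n" unfolding C_def
        proof (rule sum_mono)
          fix i assume i: "i \<in> {1..N}"
          have "\<bar>(real (a i) - real M * p i) * ln (lam i n)\<bar> = \<bar>real (a i) - real M * p i\<bar> * \<bar>ln (lam i n)\<bar>"
            by (simp add: abs_mult)
          also have "\<dots> \<le> 1 * \<bar>ln (lam i n)\<bar>"
            by (rule mult_right_mono[OF adiff[OF i]]) simp
          finally show "\<bar>(real (a i) - real M * p i) * ln (lam i n)\<bar> \<le> \<bar>ln (lam i n)\<bar>" by simp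
        qed
        finally show ?thesis .
      qed
      obtain w L where w: "w \<in> Sigma_N N" and wL: "\<forall>n. cprod lam w L n = (\<Prod>i\<in>{1..N}. lam i n ^ a i)"
        using word_exists[OF N1, of lam a] by blast
      have lnc: "ln (cprod lam w L n) = (\<Sum>i\<in>{1..N}. real (a i) * ln (lam i n))" if n: "n \<in> {1..d}" for n
      proof -
        have "ln (\<Prod>i\<in>{1..N}. lam i n ^ a i) = (\<Sum>i\<in>{1..N}. ln (lam i n ^ a i))"
          using pos[OF n] by (intro ln_prod) (auto simp: less_imp_neq[symmetric])
        also have "\<dots> = (\<Sum>i\<in>{1..N}. real (a i) * ln (lam i n))"
          using pos[OF n] by (intro sum.cong refl ln_realpow)
        finally show ?thesis using wL by simp
      qed
      have ord: "cprod lam w L (\<sigma> (k+1)) < cprod lam w L (\<sigma> k)" if k: "k \<in> {1..<d}" for k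
      proof -
        have k1: "k \<in> {1..d}" "k + 1 \<in> {1..d}" using k by auto
        have c1: "0 < cprod lam w L (\<sigma> (k+1))" using cprod_pos[OF w] pos[OF sig[OF k1(2)]] by blast
        have c2: "0 < cprod lam w L (\<sigma> k)" using cprod_pos[OF w] pos[OF sig[OF k1(1)]] by blast
        have "ln (cprod lam w L (\<sigma> (k+1))) < ln (cprod lam w L (\<sigma> k))"
          using lnc[OF sig[OF k1(1)]] lnc[OF sig[OF k1(2)]] approx[of "\<sigma> k"] approx[of "\<sigma> (k+1)"]
            Mgap[OF k] unfolding gap_def by (simp add: algebra_simps abs_le_iff)
        then show ?thesis using c1 c2 by simp
      qed
      have L1: "1 \<le> L"
      proof (rule ccontr)
        assume "\<not> 1 \<le> L" then have "L = 0" by simp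
        then show False using ord[of 1] False by (simp add: cprod_def)
      qed
      have d1: "d \<in> {1..d}" using False by simp
      define r where "r = cprod lam w L (\<sigma> d)"
      have LL: "Lscale lam w r (\<sigma> d) = L"
        unfolding r_def by (rule Lscale_eq[of w N lam "\<sigma> d", OF w pos[OF sig[OF d1]] L1])
      have r0: "0 < r" unfolding r_def using cprod_pos[OF w] pos[OF sig[OF d1]] by blast
      have r1: "r < 1"
        using cprod_strict[of w N lam "\<sigma> d" 0 L, OF w pos[OF sig[OF d1]]] L1 unfolding r_def
        by (simp add: cprod_def)
      have "strictly_ordered_cyl d lam \<sigma> w r"
        unfolding strictly_ordered_cyl_def Let_def LL using ord by blast
      then show ?thesis using assms(2) w r0 r1 unfolding Bset_def by blast
    qed
  qed
qed

end
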